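(* Let $\mathcal A=\mathbb CS_3\cong M_2(\mathbb C)\oplus\mathbb C\oplus\mathbb C$ with its Hopf algebra structure $\Delta g=g\otimes g$, $\epsilon(g)=1$, $S(g)=g^{-1}$. Let $(\mathcal A,\mathcal H,\pi,J,\gamma)$ be any finite complex spectral triple with Dirac operator $D$ whose first-order calculus $(\Omega^1_D,d_D)$, $\Omega^1_D=\mathrm{span}\{\pi(a)[D,\pi(b)]\}$, $d_Da=[D,\pi(a)]$, is nonzero. Then $(\Omega^1_D,d_D)$ is not isomorphic (as an $\mathcal A$-bimodule with derivation) to any bicovariant first-order differential calculus over the Hopf algebra $\mathbb CS_3$.
   Context: A finite complex spectral triple over $\mathcal A=\bigoplus_i M_{n_i}(\mathbb C)$: a finite-dimensional Hilbert space $\mathcal H$, a faithful $*$-representation $\pi$, an antilinear isometry $J$ with $J^2=1$ such that $\pi^0(a):=J\pi(a)^*J$ is a representation of the opposite algebra commuting with $\pi(\mathcal A)$, and a grading $\gamma=\gamma^*$, $\gamma^2=1$, commuting with $J$ and $\pi(\mathcal A)$ and of the form $\sum_m\pi(x_m)\pi^0(y_m)$. A Dirac operator is a self-adjoint $D$ with $DJ=JD$, $D\gamma=-\gamma D$, $[[D,\pi(a)],\pi^0(b)]=0$ for all $a,b$. Here $\mathcal A$-bimodule structure on $\Omega^1_D$ is via $\pi$ (left and right operator multiplication), with the identification $\mathbb CS_3\cong M_2(\mathbb C)\oplus\mathbb C\oplus\mathbb C$ given by the direct sum of the 2-dimensional irreducible, trivial and sign representations of $S_3$. A first-order differential calculus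 $(\Omega^1,d)$ over a Hopf algebra $\mathcal B$ is bicovariant (in Woronowicz's sense) if there are a left coaction $\Delta_L:\Omega^1\to\mathcal B\otimes\Omega^1$ and a right coaction $\Delta_R:\Omega^1\to\Omega^1\otimes\mathcal B$, commuting with each other, making $\Omega^1$ a bicovariant bimodule, such that $\Delta_L(x\,dy)=\Delta(x)(\mathrm{id}\otimes d)\Delta(y)$ and $\Delta_R(x\,dy)=\Delta(x)(d\otimes\mathrm{id})\Delta(y)$. *)

theory Defs
  imports "HOL-Analysis.Analysis" "HOL-Combinatorics.Permutations"
begin

text \<open>An element of the group algebra CS3 is a
  complex function on S3 (extended by 0 outside S3): a = sum_g a(g) g.\<close>

definition S3 :: "(nat \<Rightarrow> nat) set" where
  "S3 = {p. p permutes {0,1,2}}"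

definition CS3 :: "((nat \<Rightarrow> nat) \<Rightarrow> complex) set" where
  "CS3 = {a. \<forall>g. g \<notin> S3 \<longrightarrow> a g = 0}"

definition alg_add :: "((nat \<Rightarrow> nat) \<Rightarrow> complex) \<Rightarrow> ((nat \<Rightarrow> nat) \<Rightarrow> complex) \<Rightarrow> ((nat \<Rightarrow> nat) \<Rightarrow> complex)" where
  "alg_add a b = (\<lambda>g. a g + b g)"

definition alg_scale :: "complex \<Rightarrow> ((nat \<Rightarrow> nat) \<Rightarrow> complex) \<Rightarrow> ((nat \<Rightarrow> nat) \<Rightarrow> complex)" where
  "alg_scale c a = (\<lambda>g. c * a g)"

definition conv :: "((nat \<Rightarrow> nat) \<Rightarrow> complex) \<Rightarrow> ((nat \<Rightarrow> nat) \<Rightarrow> complex) \<Rightarrow> ((nat \<Rightarrow> nat) \<Rightarrow> complex)" where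
  "conv a b = (\<lambda>g. if g \<in> S3 then (\<Sum>h\<in>S3. a h * b (inv h \<circ> g)) else 0)"

text \<open>Involution: (sum a_g g)^* = sum conj(a_g) g^-1 (corresponds to the
  conjugate transpose under the identification with M2(C)+C+C by unitary irreps).\<close>
definition alg_star :: "((nat \<Rightarrow> nat) \<Rightarrow> complex) \<Rightarrow> ((nat \<Rightarrow> nat) \<Rightarrow> complex)" where
  "alg_star a = (\<lambda>g. if g \<in> S3 then cnj (a (inv g)) else 0)"

definition delta :: "(nat \<Rightarrow> nat) \<Rightarrow> ((nat \<Rightarrow> nat) \<Rightarrow> complex)" where
  "delta h = (\<lambda>g. if g = h then 1 else 0)"

definition cadj :: "complex^'n^'n \<Rightarrow> complex^'n^'n" where
  "cadj A = (\<chi> i j. cnj (A $ j $ i))"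

definition mscale :: "complex \<Rightarrow> complex^'n^'n \<Rightarrow> complex^'n^'n" where
  "mscale c A = (\<chi> i j. c * A $ i $ j)"

definition comm :: "complex^'n^'n \<Rightarrow> complex^'n^'n \<Rightarrow> complex^'n^'n" where
  "comm A B = A ** B - B ** A"

definition cspan :: "(complex^'n^'n) set \<Rightarrow> (complex^'n^'n) set" where
  "cspan S = {x. \<exists>l :: (complex \<times> (complex^'n^'n)) list.
      set (map snd l) \<subseteq> S \<and> x = sum_list (map (\<lambda>(c,m). mscale c m) l)}"

definition star_rep :: "(((nat \<Rightarrow> nat) \<Rightarrow> complex) \<Rightarrow> complex^'n^'n) \<Rightarrow> bool" where
  "star_rep \<pi> \<longleftrightarrow>
     (\<forall>a\<in>CS3. \<forall>b\<in>CS3. \<pi> (alg_add a b) = \<pi> a + \<pi> b) \<and>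
     (\<forall>c. \<forall>a\<in>CS3. \<pi> (alg_scale c a) = mscale c (\<pi> a)) \<and>
     (\<forall>a\<in>CS3. \<forall>b\<in>CS3. \<pi> (conv a b) = \<pi> a ** \<pi> b) \<and>
     (\<forall>a\<in>CS3. \<pi> (alg_star a) = cadj (\<pi> a)) \<and>
     \<pi> (delta id) = mat 1 \<and>
     inj_on \<pi> CS3"

definition real_structure :: "(complex^'n \<Rightarrow> complex^'n) \<Rightarrow> bool" where
  "real_structure J \<longleftrightarrow>
     (\<forall>x y. J (x + y) = J x + J y) \<and>
     (\<forall>c x. J (c *s x) = cnj c *s J x) \<and>
     (\<forall>x. norm (J x) = norm x) \<and>
     (\<forall>x. J (J x) = x)"

definition op0 :: "(complex^'n \<Rightarrow> complex^'n) \<Rightarrow> (((nat \<Rightarrow> nat) \<Rightarrow> complex) \<Rightarrow> complex^'n^'n)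
     \<Rightarrow> ((nat \<Rightarrow> nat) \<Rightarrow> complex) \<Rightarrow> complex^'n \<Rightarrow> complex^'n" where
  "op0 J \<pi> b = (\<lambda>x. J (cadj (\<pi> b) *v J x))"

definition order_zero :: "(complex^'n \<Rightarrow> complex^'n) \<Rightarrow> (((nat \<Rightarrow> nat) \<Rightarrow> complex) \<Rightarrow> complex^'n^'n) \<Rightarrow> bool" where
  "order_zero J \<pi> \<longleftrightarrow>
     (\<forall>a\<in>CS3. \<forall>b\<in>CS3. \<forall>x. op0 J \<pi> (conv a b) x = op0 J \<pi> b (op0 J \<pi> a x)) \<and>
     (\<forall>a\<in>CS3. \<forall>b\<in>CS3. \<forall>x. \<pi> a *v op0 J \<pi> b x = op0 J \<pi> b (\<pi> a *v x))"

definition grading :: "(complex^'n \<Rightarrow> complex^'n) \<Rightarrow> (((nat \<Rightarrow> nat) \<Rightarrow> complex) \<Rightarrow> complex^'n^'n)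
     \<Rightarrow> complex^'n^'n \<Rightarrow> bool" where
  "grading J \<pi> \<gamma> \<longleftrightarrow>
     cadj \<gamma> = \<gamma> \<and> \<gamma> ** \<gamma> = mat 1 \<and>
     (\<forall>x. J (\<gamma> *v x) = \<gamma> *v J x) \<and>
     (\<forall>a\<in>CS3. \<gamma> ** \<pi> a = \<pi> a ** \<gamma>) \<and>
     (\<exists>l. set l \<subseteq> CS3 \<times> CS3 \<and>
        (\<forall>x. \<gamma> *v x = sum_list (map (\<lambda>(p,q). \<pi> p *v op0 J \<pi> q x) l)))"

definition dirac :: "(complex^'n \<Rightarrow> complex^'n) \<Rightarrow> (((nat \<Rightarrow> nat) \<Rightarrow> complex) \<Rightarrow> complex^'n^'n)
     \<Rightarrow> complex^'n^'n \<Rightarrow> complex^'n^'n \<Rightarrow> bool" where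
  "dirac J \<pi> \<gamma> D \<longleftrightarrow>
     cadj D = D \<and>
     (\<forall>x. D *v J x = J (D *v x)) \<and>
     D ** \<gamma> = - (\<gamma> ** D) \<and>
     (\<forall>a\<in>CS3. \<forall>b\<in>CS3. \<forall>x.
        comm D (\<pi> a) *v op0 J \<pi> b x = op0 J \<pi> b (comm D (\<pi> a) *v x))"

definition OmegaD :: "(((nat \<Rightarrow> nat) \<Rightarrow> complex) \<Rightarrow> complex^'n^'n) \<Rightarrow> complex^'n^'n \<Rightarrow> (complex^'n^'n) set" where
  "OmegaD \<pi> D = cspan {\<pi> a ** comm D (\<pi> b) | a b. a \<in> CS3 \<and> b \<in> CS3}"

definition dD :: "(((nat \<Rightarrow> nat) \<Rightarrow> complex) \<Rightarrow> complex^'n^'n) \<Rightarrow> complex^'n^'n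
     \<Rightarrow> ((nat \<Rightarrow> nat) \<Rightarrow> complex) \<Rightarrow> complex^'n^'n" where
  "dD \<pi> D a = comm D (\<pi> a)"

text \<open>A first-order differential calculus over CS3 carried by the type 'w:
  complex scalar multiplication sc, left action lm, right action rm,
  differential d.\<close>
definition fodc :: "(complex \<Rightarrow> 'w::ab_group_add \<Rightarrow> 'w)
    \<Rightarrow> (((nat \<Rightarrow> nat) \<Rightarrow> complex) \<Rightarrow> 'w \<Rightarrow> 'w)
    \<Rightarrow> ('w \<Rightarrow> ((nat \<Rightarrow> nat) \<Rightarrow> complex) \<Rightarrow> 'w)
    \<Rightarrow> (((nat \<Rightarrow> nat) \<Rightarrow> complex) \<Rightarrow> 'w) \<Rightarrow> bool" where
  "fodc sc lm rm d \<longleftrightarrow>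
     (\<forall>c x y. sc c (x + y) = sc c x + sc c y) \<and>
     (\<forall>c e x. sc (c + e) x = sc c x + sc e x) \<and>
     (\<forall>c e x. sc c (sc e x) = sc (c * e) x) \<and>
     (\<forall>x. sc 1 x = x) \<and>
     (\<forall>a\<in>CS3. \<forall>x y. lm a (x + y) = lm a x + lm a y \<and> rm (x + y) a = rm x a + rm y a) \<and>
     (\<forall>a\<in>CS3. \<forall>b\<in>CS3. \<forall>x. lm (alg_add a b) x = lm a x + lm b x \<and> rm x (alg_add a b) = rm x a + rm x b) \<and>
     (\<forall>a\<in>CS3. \<forall>c x. lm (alg_scale c a) x = sc c (lm a x) \<and> rm x (alg_scale c a) = sc c (rm x a)
        \<and> lm a (sc c x) = sc c (lm a x) \<and> rm (sc c x) a = sc c (rm x a)) \<and>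
     (\<forall>a\<in>CS3. \<forall>b\<in>CS3. \<forall>x. lm (conv a b) x = lm a (lm b x) \<and> rm x (conv a b) = rm (rm x a) b
        \<and> lm a (rm x b) = rm (lm a x) b) \<and>
     (\<forall>x. lm (delta id) x = x \<and> rm x (delta id) = x) \<and>
     (\<forall>a\<in>CS3. \<forall>b\<in>CS3. d (alg_add a b) = d a + d b) \<and>
     (\<forall>a\<in>CS3. \<forall>c. d (alg_scale c a) = sc c (d a)) \<and>
     (\<forall>a\<in>CS3. \<forall>b\<in>CS3. d (conv a b) = lm a (d b) + rm (d a) b) \<and>
     (\<forall>x. \<exists>l. set l \<subseteq> CS3 \<times> CS3 \<and> x = sum_list (map (\<lambda>(a,b). lm a (d b)) l))"

text \<open>Since CS3 has the basis S3, an element of CS3 \<otimes> Omega (resp. Omega \<otimes> CS3)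
  is uniquely sum_{g in S3} g \<otimes> w_g (resp. sum_g w_g \<otimes> g) and is represented by the
  function g \<mapsto> w_g on S3.  dL, dR represent the left and right coactions in this way.
  Coproduct: Delta g = g \<otimes> g, counit eps g = 1.\<close>
definition bicovariant_fodc :: "(complex \<Rightarrow> 'w::ab_group_add \<Rightarrow> 'w)
    \<Rightarrow> (((nat \<Rightarrow> nat) \<Rightarrow> complex) \<Rightarrow> 'w \<Rightarrow> 'w)
    \<Rightarrow> ('w \<Rightarrow> ((nat \<Rightarrow> nat) \<Rightarrow> complex) \<Rightarrow> 'w)
    \<Rightarrow> (((nat \<Rightarrow> nat) \<Rightarrow> complex) \<Rightarrow> 'w)
    \<Rightarrow> ('w \<Rightarrow> (nat \<Rightarrow> nat) \<Rightarrow> 'w) \<Rightarrow> ('w \<Rightarrow> (nat \<Rightarrow> nat) \<Rightarrow> 'w) \<Rightarrow> bool" where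
  "bicovariant_fodc sc lm rm d dL dR \<longleftrightarrow>
     fodc sc lm rm d \<and>
     \<comment> \<open>linearity of the coactions\<close>
     (\<forall>x y. \<forall>g\<in>S3. dL (x + y) g = dL x g + dL y g \<and> dR (x + y) g = dR x g + dR y g) \<and>
     (\<forall>c x. \<forall>g\<in>S3. dL (sc c x) g = sc c (dL x g) \<and> dR (sc c x) g = sc c (dR x g)) \<and>
     \<comment> \<open>coassociativity: (id\<otimes>dL)dL = (Delta\<otimes>id)dL and (dR\<otimes>id)dR = (id\<otimes>Delta)dR\<close>
     (\<forall>x. \<forall>g\<in>S3. \<forall>h\<in>S3. dL (dL x g) h = (if h = g then dL x g else 0)) \<and>
     (\<forall>x. \<forall>g\<in>S3. \<forall>h\<in>S3. dR (dR x g) h = (if h = g then dR x g else 0)) \<and>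
     \<comment> \<open>counit: (eps\<otimes>id)dL = id and (id\<otimes>eps)dR = id\<close>
     (\<forall>x. (\<Sum>g\<in>S3. dL x g) = x \<and> (\<Sum>g\<in>S3. dR x g) = x) \<and>
     \<comment> \<open>the coactions commute: (id\<otimes>dR)dL = (dL\<otimes>id)dR\<close>
     (\<forall>x. \<forall>g\<in>S3. \<forall>h\<in>S3. dR (dL x g) h = dL (dR x h) g) \<and>
     \<comment> \<open>bicovariant bimodule: dL(a x b) = Delta(a) dL(x) Delta(b), same for dR\<close>
     (\<forall>a\<in>CS3. \<forall>b\<in>CS3. \<forall>x. \<forall>g\<in>S3.
        dL (rm (lm a x) b) g =
          (\<Sum>h\<in>S3. \<Sum>k\<in>S3. sc (a h * b k) (rm (lm (delta h) (dL x (inv h \<circ> g \<circ> inv k))) (delta k))) \<and>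
        dR (rm (lm a x) b) g =
          (\<Sum>h\<in>S3. \<Sum>k\<in>S3. sc (a h * b k) (rm (lm (delta h) (dR x (inv h \<circ> g \<circ> inv k))) (delta k)))) \<and>
     \<comment> \<open>dL(x dy) = Delta(x)(id\<otimes>d)Delta(y), dR(x dy) = Delta(x)(d\<otimes>id)Delta(y)\<close>
     (\<forall>a\<in>CS3. \<forall>b\<in>CS3. \<forall>g\<in>S3.
        dL (lm a (d b)) g = (\<Sum>h\<in>S3. sc (a h * b (inv h \<circ> g)) (lm (delta h) (d (delta (inv h \<circ> g))))) \<and>
        dR (lm a (d b)) g = (\<Sum>h\<in>S3. sc (a h * b (inv h \<circ> g)) (lm (delta h) (d (delta (inv h \<circ> g))))))"

definition calc_iso :: "(((nat \<Rightarrow> nat) \<Rightarrow> complex) \<Rightarrow> complex^'n^'n) \<Rightarrow> complex^'n^'n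
    \<Rightarrow> (complex \<Rightarrow> 'w::ab_group_add \<Rightarrow> 'w)
    \<Rightarrow> (((nat \<Rightarrow> nat) \<Rightarrow> complex) \<Rightarrow> 'w \<Rightarrow> 'w)
    \<Rightarrow> ('w \<Rightarrow> ((nat \<Rightarrow> nat) \<Rightarrow> complex) \<Rightarrow> 'w)
    \<Rightarrow> (((nat \<Rightarrow> nat) \<Rightarrow> complex) \<Rightarrow> 'w) \<Rightarrow> (complex^'n^'n \<Rightarrow> 'w) \<Rightarrow> bool" where
  "calc_iso \<pi> D sc lm rm d \<phi> \<longleftrightarrow>
     bij_betw \<phi> (OmegaD \<pi> D) UNIV \<and>
     (\<forall>x\<in>OmegaD \<pi> D. \<forall>y\<in>OmegaD \<pi> D. \<phi> (x + y) = \<phi> x + \<phi> y) \<and>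
     (\<forall>c. \<forall>x\<in>OmegaD \<pi> D. \<phi> (mscale c x) = sc c (\<phi> x)) \<and>
     (\<forall>a\<in>CS3. \<forall>x\<in>OmegaD \<pi> D. \<phi> (\<pi> a ** x) = lm a (\<phi> x) \<and> \<phi> (x ** \<pi> a) = rm (\<phi> x) a) \<and>
     (\<forall>a\<in>CS3. \<phi> (dD \<pi> D a) = d a)"

end

theory Submission
  imports Defs "HOL-Library.Function_Algebras"
begin


definition "cr = (\<lambda>n::nat. if n = 0 then 1 else if n = 1 then 2 else if n = 2 then 0 else n)"
definition "cr2 = (\<lambda>n::nat. if n = 0 then 2 else if n = 1 then 0 else if n = 2 then 1 else n)"
definition "ta = (\<lambda>n::nat. if n = 0 then 1 else if n = 1 then 0 else n)"
definition "tb = (\<lambda>n::nat. if n = 0 then 2 else if n = 2 then 0 else n)"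
definition "tc = (\<lambda>n::nat. if n = 1 then 2 else if n = 2 then 1 else n)"

lemmas pdefs = cr_def cr2_def ta_def tb_def tc_def

lemma neqI: "f 0 \<noteq> g (0::nat) \<or> f 1 \<noteq> g 1 \<Longrightarrow> f \<noteq> (g::nat \<Rightarrow> nat)" by auto

lemma distinct_S3 [simp]:
  "cr \<noteq> id" "cr2 \<noteq> id" "ta \<noteq> id" "tb \<noteq> id" "tc \<noteq> id"
  "id \<noteq> cr" "id \<noteq> cr2" "id \<noteq> ta" "id \<noteq> tb" "id \<noteq> tc"
  "cr \<noteq> cr2" "cr \<noteq> ta" "cr \<noteq> tb" "cr \<noteq> tc"
  "cr2 \<noteq> cr" "cr2 \<noteq> ta" "cr2 \<noteq> tb" "cr2 \<noteq> tc"
  "ta \<noteq> cr" "ta \<noteq> cr2" "ta \<noteq> tb" "ta \<noteq> tc"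
  "tb \<noteq> cr" "tb \<noteq> cr2" "tb \<noteq> ta" "tb \<noteq> tc"
  "tc \<noteq> cr" "tc \<noteq> cr2" "tc \<noteq> ta" "tc \<noteq> tb"
  by (rule neqI, simp add: pdefs)+


lemma canon:
  "id = (\<lambda>n::nat. if n = 0 then 0 else if n = 1 then 1 else if n = 2 then 2 else n)"
  "cr = (\<lambda>n::nat. if n = 0 then 1 else if n = 1 then 2 else if n = 2 then 0 else n)"
  "cr2 = (\<lambda>n::nat. if n = 0 then 2 else if n = 1 then 0 else if n = 2 then 1 else n)"
  "ta = (\<lambda>n::nat. if n = 0 then 1 else if n = 1 then 0 else if n = 2 then 2 else n)"
  "tb = (\<lambda>n::nat. if n = 0 then 2 else if n = 1 then 1 else if n = 2 then 0 else n)"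
  "tc = (\<lambda>n::nat. if n = 0 then 0 else if n = 1 then 2 else if n = 2 then 1 else n)"
  by (auto simp: pdefs fun_eq_iff)

lemma perm3_cases:
  assumes "p permutes {0::nat,1,2}"
  shows "p = id \<or> p = cr \<or> p = cr2 \<or> p = ta \<or> p = tb \<or> p = tc"
proof -
  have out: "\<And>n. n \<notin> {0,1,2} \<Longrightarrow> p n = n" using permutes_not_in[OF assms] by blast
  have inr: "\<And>n. n \<in> {0,1,2} \<Longrightarrow> p n \<in> {0,1,2}" using permutes_in_image[OF assms] by metis
  have inj: "inj p" by (rule permutes_inj[OF assms])
  have a: "p 0 \<in> {0,1,2}" "p 1 \<in> {0,1,2}" "p 2 \<in> {0,1,2}" by (rule inr, simp)+
  have d: "p 0 \<noteq> p 1" "p 0 \<noteq> p 2" "p 1 \<noteq> p 2" by (simp_all add: inj_eq[OF inj])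
  have pe: "p = (\<lambda>n. if n = 0 then p 0 else if n = 1 then p 1 else if n = 2 then p 2 else n)"
  proof
    fix n show "p n = (if n = 0 then p 0 else if n = 1 then p 1 else if n = 2 then p 2 else n)"
      using out by (cases "n \<in> {0,1,2}") auto
  qed
  define x y z where "x = p 0" and "y = p 1" and "z = p 2"
  have pe2: "p = (\<lambda>n. if n = 0 then x else if n = 1 then y else if n = 2 then z else n)"
    by (subst pe) (simp only: x_def y_def z_def)
  have "x \<in> {0,1,2}" "y \<in> {0,1,2}" "z \<in> {0,1,2}" "x \<noteq> y" "x \<noteq> z" "y \<noteq> z"
    using a d by (simp_all add: x_def y_def z_def)
  then have "(x = 0 \<and> y = 1 \<and> z = 2) \<or> (x = 1 \<and> y = 2 \<and> z = 0) \<or> (x = 2 \<and> y = 0 \<and> z = 1)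
     \<or> (x = 1 \<and> y = 0 \<and> z = 2) \<or> (x = 2 \<and> y = 1 \<and> z = 0) \<or> (x = 0 \<and> y = 2 \<and> z = 1)"
    by (elim insertE emptyE) simp_all
  moreover have "x = 0 \<Longrightarrow> y = 1 \<Longrightarrow> z = 2 \<Longrightarrow> p = id" unfolding pe2 canon by (rule ext) simp
  moreover have "x = 1 \<Longrightarrow> y = 2 \<Longrightarrow> z = 0 \<Longrightarrow> p = cr" unfolding pe2 canon by (rule ext) simp
  moreover have "x = 2 \<Longrightarrow> y = 0 \<Longrightarrow> z = 1 \<Longrightarrow> p = cr2" unfolding pe2 canon by (rule ext) simp
  moreover have "x = 1 \<Longrightarrow> y = 0 \<Longrightarrow> z = 2 \<Longrightarrow> p = ta" unfolding pe2 canon by (rule ext) simp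
  moreover have "x = 2 \<Longrightarrow> y = 1 \<Longrightarrow> z = 0 \<Longrightarrow> p = tb" unfolding pe2 canon by (rule ext) simp
  moreover have "x = 0 \<Longrightarrow> y = 2 \<Longrightarrow> z = 1 \<Longrightarrow> p = tc" unfolding pe2 canon by (rule ext) simp
  ultimately show ?thesis by metis
qed
lemma comp_tab [simp]:
  "cr \<circ> cr = cr2"
  "cr \<circ> cr2 = id"
  "cr \<circ> ta = tb"
  "cr \<circ> tb = tc"
  "cr \<circ> tc = ta"
  "cr2 \<circ> cr = id"
  "cr2 \<circ> cr2 = cr"
  "cr2 \<circ> ta = tc"
  "cr2 \<circ> tb = ta"
  "cr2 \<circ> tc = tb"
  "ta \<circ> cr = tc"
  "ta \<circ> cr2 = tb"
  "ta \<circ> ta = id"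
  "ta \<circ> tb = cr2"
  "ta \<circ> tc = cr"
  "tb \<circ> cr = ta"
  "tb \<circ> cr2 = tc"
  "tb \<circ> ta = cr"
  "tb \<circ> tb = id"
  "tb \<circ> tc = cr2"
  "tc \<circ> cr = tb"
  "tc \<circ> cr2 = ta"
  "tc \<circ> ta = cr2"
  "tc \<circ> tb = cr"
  "tc \<circ> tc = id"
  by (rule ext, simp add: pdefs)+

lemma perm_of_inv:
  assumes "f \<circ> g = id" "g \<circ> f = id" "\<And>x. x \<notin> S \<Longrightarrow> f x = x"
  shows "f permutes S"
  unfolding permutes_def
proof (intro conjI allI impI)
  fix x assume "x \<notin> S" then show "f x = x" using assms(3) by blast
next
  fix y
  have "f (g y) = y" using assms(1) by (metis comp_apply id_apply)
  moreover have "\<And>x. f x = y \<Longrightarrow> x = g y" using assms(2) by (metis comp_apply id_apply)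
  ultimately show "\<exists>!x. f x = y" by blast
qed

lemma S3_eq: "S3 = {id, cr, cr2, ta, tb, tc}"
proof
  show "S3 \<subseteq> {id, cr, cr2, ta, tb, tc}" unfolding S3_def using perm3_cases by blast
  have "cr permutes {0,1,2}" by (rule perm_of_inv[of _ cr2]) (simp, simp, simp add: cr_def)
  moreover have "cr2 permutes {0,1,2}" by (rule perm_of_inv[of _ cr]) (simp, simp, simp add: cr2_def)
  moreover have "ta permutes {0,1,2}" by (rule perm_of_inv[of _ ta]) (simp, simp, simp add: ta_def)
  moreover have "tb permutes {0,1,2}" by (rule perm_of_inv[of _ tb]) (simp, simp, simp add: tb_def)
  moreover have "tc permutes {0,1,2}" by (rule perm_of_inv[of _ tc]) (simp, simp, simp add: tc_def)
  moreover have "id permutes {0::nat,1,2}" by (rule permutes_id)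
  ultimately show "{id, cr, cr2, ta, tb, tc} \<subseteq> S3" unfolding S3_def by blast
qed

lemma inv_tab [simp]:
  "inv cr = cr2" "inv cr2 = cr" "inv ta = ta" "inv tb = tb" "inv tc = tc"
  by (rule inv_unique_comp; simp)+



section \<open>Group algebra facts\<close>

lemma S3_perm: "g \<in> S3 \<Longrightarrow> g permutes {0,1,2}" by (simp add: S3_def)

lemma S3_inv [simp]: "g \<in> S3 \<Longrightarrow> inv g \<in> S3"
  by (simp add: S3_def permutes_inv)
lemma S3_comp [simp]: "g \<in> S3 \<Longrightarrow> h \<in> S3 \<Longrightarrow> g \<circ> h \<in> S3"
  by (simp add: S3_def permutes_compose)
lemma S3_id [simp]: "id \<in> S3" by (simp add: S3_def permutes_id)
lemma S3_inv_o [simp]: "g \<in> S3 \<Longrightarrow> inv g \<circ> g = id" "g \<in> S3 \<Longrightarrow> g \<circ> inv g = id"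
  by (simp_all add: S3_def permutes_inv_o)
lemma S3_inv_inv [simp]: "g \<in> S3 \<Longrightarrow> inv (inv g) = g"
  by (simp add: S3_def permutes_inv_inv)
lemma S3_elems [simp]: "cr \<in> S3" "cr2 \<in> S3" "ta \<in> S3" "tb \<in> S3" "tc \<in> S3"
  by (simp_all add: S3_eq)
lemma finite_S3 [simp]: "finite S3" by (simp add: S3_eq)

lemma sum_S3: "(\<Sum>g\<in>S3. f g) = f id + f cr + f cr2 + f ta + f tb + f tc"
  by (simp add: S3_eq add.assoc)

lemma delta_in [simp]: "g \<in> S3 \<Longrightarrow> delta g \<in> CS3"
  by (auto simp: CS3_def delta_def)
lemma conv_in [simp]: "conv a b \<in> CS3"
  by (simp add: CS3_def conv_def)

lemma S3_cancel_left: "h \<in> S3 \<Longrightarrow> k \<in> S3 \<Longrightarrow> m \<in> S3 \<Longrightarrow> (inv h \<circ> k = m) \<longleftrightarrow> (h = k \<circ> inv m)"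
proof
  assume a: "h \<in> S3" "k \<in> S3" "m \<in> S3" and e: "inv h \<circ> k = m"
  have "h \<circ> (inv h \<circ> k) = k" using a by (simp add: o_assoc)
  then have "h \<circ> m = k" using e by simp
  then have "h \<circ> m \<circ> inv m = k \<circ> inv m" by simp
  then show "h = k \<circ> inv m" using a by (simp add: o_assoc[symmetric])
next
  assume a: "h \<in> S3" "k \<in> S3" "m \<in> S3" and e: "h = k \<circ> inv m"
  have "inv h = m \<circ> inv k"
    using a e by (metis S3_comp S3_inv S3_inv_inv S3_inv_o(2) inv_unique_comp o_assoc comp_id)
  then show "inv h \<circ> k = m" using a by (simp add: o_assoc[symmetric])
qed

lemma conv_delta_left: "g \<in> S3 \<Longrightarrow> conv (delta g) a = (\<lambda>k. if k \<in> S3 then a (inv g \<circ> k) else 0)"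
proof (rule ext)
  fix k assume g: "g \<in> S3"
  have "(\<Sum>h\<in>S3. delta g h * a (inv h \<circ> k)) = (\<Sum>h\<in>S3. if h = g then a (inv h \<circ> k) else 0)"
    by (rule sum.cong) (auto simp: delta_def)
  also have "\<dots> = a (inv g \<circ> k)" using g by simp
  finally show "conv (delta g) a k = (if k \<in> S3 then a (inv g \<circ> k) else 0)"
    by (simp add: conv_def)
qed

lemma conv_delta_right: "m \<in> S3 \<Longrightarrow> conv a (delta m) = (\<lambda>k. if k \<in> S3 then a (k \<circ> inv m) else 0)"
proof (rule ext)
  fix k assume m: "m \<in> S3"
  show "conv a (delta m) k = (if k \<in> S3 then a (k \<circ> inv m) else 0)"
  proof (cases "k \<in> S3")
    case True
    have "(\<Sum>h\<in>S3. a h * delta m (inv h \<circ> k)) = (\<Sum>h\<in>S3. if h = k \<circ> inv m then a h else 0)"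
      by (rule sum.cong) (auto simp: delta_def S3_cancel_left[OF _ True m])
    also have "\<dots> = a (k \<circ> inv m)" using True m by simp
    finally show ?thesis using True by (simp add: conv_def)
  qed (simp add: conv_def)
qed

lemma conv_delta_delta: "g \<in> S3 \<Longrightarrow> h \<in> S3 \<Longrightarrow> conv (delta g) (delta h) = delta (g \<circ> h)"
proof (rule ext)
  fix k assume a: "g \<in> S3" "h \<in> S3"
  show "conv (delta g) (delta h) k = delta (g \<circ> h) k"
  proof (cases "k \<in> S3")
    case True
    have "(inv g \<circ> k = h) = (k = g \<circ> h)"
    proof
      assume "inv g \<circ> k = h"
      then have "g \<circ> (inv g \<circ> k) = g \<circ> h" by simp
      then show "k = g \<circ> h" using a by (simp add: o_assoc)
    next
      assume "k = g \<circ> h"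
      then show "inv g \<circ> k = h" using a by (simp add: o_assoc)
    qed
    then show ?thesis using a True unfolding conv_delta_left[OF a(1)] by (simp add: delta_def)
  next
    case False
    then have "k \<noteq> g \<circ> h" using a by auto
    then show ?thesis using False a unfolding conv_delta_left[OF a(1)] by (simp add: delta_def)
  qed
qed


definition p2 :: "(nat \<Rightarrow> nat) \<Rightarrow> complex" where
  "p2 = (\<lambda>g. if g = id then 2/3 else if g = cr \<or> g = cr2 then -1/3 else 0)"

lemma p2_in [simp]: "p2 \<in> CS3"
  unfolding CS3_def p2_def by auto

lemma p2_vals [simp]: "p2 id = 2/3" "p2 cr = -1/3" "p2 cr2 = -1/3" "p2 ta = 0" "p2 tb = 0" "p2 tc = 0"
  by (simp_all add: p2_def)

lemma S3_cases: "k \<in> S3 \<Longrightarrow> (k = id \<Longrightarrow> P) \<Longrightarrow> (k = cr \<Longrightarrow> P) \<Longrightarrow> (k = cr2 \<Longrightarrow> P)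
   \<Longrightarrow> (k = ta \<Longrightarrow> P) \<Longrightarrow> (k = tb \<Longrightarrow> P) \<Longrightarrow> (k = tc \<Longrightarrow> P) \<Longrightarrow> P"
  unfolding S3_eq by blast

lemma conv_p2_central: "conv p2 a = conv a p2"
proof (rule ext)
  fix k
  show "conv p2 a k = conv a p2 k"
  proof (cases "k \<in> S3")
    case True
    then show ?thesis
      unfolding conv_def
      by (rule S3_cases) (simp_all add: sum_S3 algebra_simps)
  qed (simp add: conv_def)
qed

lemma sum_fun_apply: "(\<Sum>g\<in>A. (f g :: 'a \<Rightarrow> 'b::comm_monoid_add)) k = (\<Sum>g\<in>A. f g k)"
  by (induct A rule: infinite_finite_induct) auto

definition Ex :: "((nat \<Rightarrow> nat) \<Rightarrow> complex) \<Rightarrow> ((nat \<Rightarrow> nat) \<Rightarrow> complex)" where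
  "Ex x = (\<Sum>g\<in>S3. conv (conv (delta g) x) (delta (inv g)))"

lemma Ex_apply: "Ex x k = (if k \<in> S3 then (\<Sum>g\<in>S3. x (inv g \<circ> k \<circ> g)) else 0)"
proof -
  have "Ex x k = (\<Sum>g\<in>S3. conv (conv (delta g) x) (delta (inv g)) k)"
    unfolding Ex_def by (rule sum_fun_apply)
  also have "\<dots> = (\<Sum>g\<in>S3. if k \<in> S3 then x (inv g \<circ> k \<circ> g) else 0)"
    by (rule sum.cong) (simp_all add: conv_delta_right conv_delta_left o_assoc)
  finally show ?thesis by simp
qed

lemma conv_p2_Ex: "conv p2 (Ex x) = alg_scale (6 * x id - 3 * (x cr + x cr2)) p2"
proof (rule ext)
  fix k
  show "conv p2 (Ex x) k = alg_scale (6 * x id - 3 * (x cr + x cr2)) p2 k"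
  proof (cases "k \<in> S3")
    case True
    then show ?thesis
      unfolding conv_def alg_scale_def
      by (rule S3_cases) (simp_all add: sum_S3 Ex_apply algebra_simps)
  next
    case False
    then have "k \<noteq> id" "k \<noteq> cr" "k \<noteq> cr2" by auto
    then show ?thesis using False by (simp add: conv_def alg_scale_def p2_def)
  qed
qed


section \<open>Abstract side\<close>

lemma sum2_delta:
  fixes F :: "(nat \<Rightarrow> nat) \<Rightarrow> (nat \<Rightarrow> nat) \<Rightarrow> 'w::ab_group_add"
  assumes sc0: "\<And>x. sc 0 x = 0" and a: "a \<in> S3" and b: "b \<in> S3"
  shows "(\<Sum>h\<in>S3. \<Sum>k\<in>S3. sc (delta a h * delta b k) (F h k)) = sc 1 (F a b)"
proof -
  have inner: "(\<Sum>k\<in>S3. sc (delta a h * delta b k) (F h k)) = (if h = a then sc 1 (F h b) else 0)" for h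
  proof (cases "h = a")
    case True
    have "(\<Sum>k\<in>S3. sc (delta a h * delta b k) (F h k)) = (\<Sum>k\<in>S3. if k = b then sc 1 (F h k) else 0)"
      by (rule sum.cong) (simp_all add: True delta_def sc0)
    also have "\<dots> = sc 1 (F h b)" using b by simp
    finally show ?thesis using True by simp
  next
    case False
    then show ?thesis by (simp add: delta_def sc0)
  qed
  show ?thesis unfolding inner using a by simp
qed

lemma abstract_side:
  fixes sc :: "complex \<Rightarrow> 'w::ab_group_add \<Rightarrow> 'w"
  assumes bic: "bicovariant_fodc sc lm rm d dL dR"
    and van: "\<And>y. rm (lm p2 y) p2 = 0"
  shows "(x::'w) = 0"
proof -
  have fo: "fodc sc lm rm d" using bic by (simp add: bicovariant_fodc_def)
  have sc_add: "\<And>c x y. sc c (x + y) = sc c x + sc c y" using fo by (simp add: fodc_def)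
  have sc_add2: "\<And>c e x. sc (c + e) x = sc c x + sc e x" using fo by (simp add: fodc_def)
  have sc_assoc: "\<And>c e x. sc c (sc e x) = sc (c * e) x" using fo by (simp add: fodc_def)
  have sc_one: "\<And>x. sc 1 x = x" using fo by (simp add: fodc_def)
  have lm_add: "\<And>a x y. a \<in> CS3 \<Longrightarrow> lm a (x + y) = lm a x + lm a y" using fo by (simp add: fodc_def)
  have rm_add: "\<And>a x y. a \<in> CS3 \<Longrightarrow> rm (x + y) a = rm x a + rm y a" using fo by (simp add: fodc_def)
  have lm_conv: "\<And>a b x. a \<in> CS3 \<Longrightarrow> b \<in> CS3 \<Longrightarrow> lm (conv a b) x = lm a (lm b x)"
    using fo by (simp add: fodc_def)
  have rm_conv: "\<And>a b x. a \<in> CS3 \<Longrightarrow> b \<in> CS3 \<Longrightarrow> rm x (conv a b) = rm (rm x a) b"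
    using fo by (simp add: fodc_def)
  have lm_rm: "\<And>a b x. a \<in> CS3 \<Longrightarrow> b \<in> CS3 \<Longrightarrow> lm a (rm x b) = rm (lm a x) b"
    using fo by (simp add: fodc_def)
  have lm_id: "\<And>x. lm (delta id) x = x" and rm_id: "\<And>x. rm x (delta id) = x"
    using fo by (simp_all add: fodc_def)
  have sc0: "\<And>x. sc 0 x = 0" using sc_add2[of 0 0] by (metis add.right_neutral add_cancel_right_right)
  have scz: "\<And>c. sc c 0 = 0" using sc_add by (metis add.right_neutral add_cancel_right_right)
  have lmz: "\<And>a. a \<in> CS3 \<Longrightarrow> lm a 0 = 0" using lm_add by (metis add.right_neutral add_cancel_right_right)
  have rmz: "\<And>a. a \<in> CS3 \<Longrightarrow> rm 0 a = 0" using rm_add by (metis add.right_neutral add_cancel_right_right)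
  have scneg: "\<And>c x. sc c (- x) = - sc c x"
    using sc_add scz by (metis add.right_inverse add_eq_0_iff)
  have bim: "\<And>a b x g. a \<in> CS3 \<Longrightarrow> b \<in> CS3 \<Longrightarrow> g \<in> S3 \<Longrightarrow>
        dL (rm (lm a x) b) g =
          (\<Sum>h\<in>S3. \<Sum>k\<in>S3. sc (a h * b k) (rm (lm (delta h) (dL x (inv h \<circ> g \<circ> inv k))) (delta k)))"
    using bic unfolding bicovariant_fodc_def by blast
  have coass: "\<And>x g h. g \<in> S3 \<Longrightarrow> h \<in> S3 \<Longrightarrow> dL (dL x g) h = (if h = g then dL x g else 0)"
    using bic unfolding bicovariant_fodc_def by blast
  have counit: "\<And>x. (\<Sum>g\<in>S3. dL x g) = x"
    using bic unfolding bicovariant_fodc_def by blast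
  define inva where "inva y \<longleftrightarrow> (\<forall>h\<in>S3. dL y h = (if h = id then y else 0))" for y
  define cj where "cj g y = rm (lm (delta g) y) (delta (inv g))" for g y
  have cj_inv: "inva (cj g y)" if "inva y" "g = cr \<or> g = cr2" for g y
    unfolding inva_def
  proof
    fix h assume h: "h \<in> S3"
    have "dL (cj g y) h = sc 1 (rm (lm (delta g) (dL y (inv g \<circ> h \<circ> inv (inv g)))) (delta (inv g)))"
      unfolding cj_def using that h
      by (subst bim) (auto intro!: sum2_delta sc0)
    also have "\<dots> = (if h = id then cj g y else 0)"
    proof -
      have yv: "\<And>h. h \<in> S3 \<Longrightarrow> dL y h = (if h = id then y else 0)" using that(1) unfolding inva_def by blast
      show ?thesis
      using that(2)
      proof
        assume g: "g = cr"
        show ?thesis unfolding g cj_def by (rule S3_cases[OF h]) (simp_all add: sc_one lmz rmz yv)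
      next
        assume g: "g = cr2"
        show ?thesis unfolding g cj_def by (rule S3_cases[OF h]) (simp_all add: sc_one lmz rmz yv)
      qed
    qed
    finally show "dL (cj g y) h = (if h = id then cj g y else 0)" .
  qed
  have dL_add0: "\<forall>x y. \<forall>g\<in>S3. dL (x + y) g = dL x g + dL y g \<and> dR (x + y) g = dR x g + dR y g"
    using bic unfolding bicovariant_fodc_def by (elim conjE) assumption
  have dL_add: "\<And>x y g. g \<in> S3 \<Longrightarrow> dL (x + y) g = dL x g + dL y g"
    using dL_add0 by blast
  have dLz: "\<And>g. g \<in> S3 \<Longrightarrow> dL 0 g = 0" using dL_add by (metis add.right_neutral add_cancel_right_right)
  have eq: "sc (4/9) y + sc (1/9) (cj cr y) + sc (1/9) (cj cr2 y) = 0" if "inva y" for y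
  proof -
    have yv: "\<And>h. h \<in> S3 \<Longrightarrow> dL y h = (if h = id then y else 0)" using that unfolding inva_def by blast
    have "dL (rm (lm p2 y) p2) id = sc (4/9) y + sc (1/9) (cj cr y) + sc (1/9) (cj cr2 y)"
      by (subst bim) (simp_all add: sum_S3 yv sc0 scz lmz rmz lm_id rm_id cj_def)
    then show ?thesis using van[of y] dLz[of id] by simp
  qed
  have cjcj: "cj g (cj h y) = rm (lm (delta (g \<circ> h)) y) (delta (inv h \<circ> inv g))" if "g \<in> S3" "h \<in> S3" for g h y
    unfolding cj_def using that
    by (simp add: lm_rm rm_conv[symmetric] lm_conv[symmetric] conv_delta_delta)
  have inv0: "y = 0" if "inva y" for y
  proof -
    define b where "b = cj cr y"
    define c where "c = cj cr2 y"
    have ib: "inva b" "inva c" using cj_inv that unfolding b_def c_def by blast+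
    have cb: "cj cr b = c" "cj cr2 b = y" unfolding b_def c_def
      by (simp_all add: cjcj) (simp_all add: cj_def lm_id rm_id)
    have cc: "cj cr c = y" "cj cr2 c = b" unfolding b_def c_def
      by (simp_all add: cjcj) (simp_all add: cj_def lm_id rm_id)
    have E1: "sc (4/9) y + sc (1/9) b + sc (1/9) c = 0" using eq[OF that] unfolding b_def c_def .
    have E2: "sc (4/9) b + sc (1/9) c + sc (1/9) y = 0" using eq[OF ib(1)] unfolding cb .
    have E3: "sc (4/9) c + sc (1/9) y + sc (1/9) b = 0" using eq[OF ib(2)] unfolding cc .
    have s3: "sc (1/3) x = sc (4/9) x - sc (1/9) x" for x
      using sc_add2[of "1/3" "1/9" x] by (simp add: eq_diff_eq)
    have "sc (1/3) y - sc (1/3) b = (sc (4/9) y + sc (1/9) b + sc (1/9) c) - (sc (4/9) b + sc (1/9) c + sc (1/9) y)"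
      unfolding s3 by (simp add: algebra_simps)
    then have "sc (1/3) y = sc (1/3) b" using E1 E2 by simp
    then have "sc 3 (sc (1/3) y) = sc 3 (sc (1/3) b)" by simp
    then have yb: "y = b" by (simp add: sc_assoc sc_one)
    have "sc (1/3) y - sc (1/3) c = (sc (4/9) y + sc (1/9) b + sc (1/9) c) - (sc (4/9) c + sc (1/9) y + sc (1/9) b)"
      unfolding s3 by (simp add: algebra_simps)
    then have "sc (1/3) y = sc (1/3) c" using E1 E3 by simp
    then have "sc 3 (sc (1/3) y) = sc 3 (sc (1/3) c)" by simp
    then have yc: "y = c" by (simp add: sc_assoc sc_one)
    have "sc (2/3) y = sc (4/9) y + sc (1/9) y + sc (1/9) y"
      using sc_add2[of "4/9" "1/9" y] sc_add2[of "5/9" "1/9" y] by simp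
    then have "sc (2/3) y = 0" using E1 yb yc by simp
    then have "sc (3/2) (sc (2/3) y) = 0" by (simp add: scz)
    then show "y = 0" by (simp add: sc_assoc sc_one)
  qed
  have "dL x g = 0" if g: "g \<in> S3" for g
  proof -
    define y where "y = lm (delta (inv g)) (dL x g)"
    have "inva y" unfolding inva_def
    proof
      fix h assume h: "h \<in> S3"
      have "dL y h = dL (rm (lm (delta (inv g)) (dL x g)) (delta id)) h" by (simp add: y_def rm_id)
      also have "\<dots> = (\<Sum>ha\<in>S3. \<Sum>k\<in>S3. sc (delta (inv g) ha * delta id k)
              (rm (lm (delta ha) (dL (dL x g) (inv ha \<circ> h \<circ> inv k))) (delta k)))"
        using g h by (intro bim) simp_all
      also have "\<dots> = sc 1 (rm (lm (delta (inv g)) (dL (dL x g) (inv (inv g) \<circ> h \<circ> inv id))) (delta id))"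
        using g by (intro sum2_delta[where sc=sc, OF sc0]) simp_all
      also have "\<dots> = (if h = id then y else 0)"
      proof -
        have "(g \<circ> h = g) = (h = id)"
        proof
          assume "g \<circ> h = g"
          then have "inv g \<circ> (g \<circ> h) = inv g \<circ> g" by simp
          then show "h = id" using g by (simp add: o_assoc)
        qed simp
        then show ?thesis using g h by (simp add: coass sc_one rm_id lmz y_def)
      qed
      finally show "dL y h = (if h = id then y else 0)" .
    qed
    then have "y = 0" by (rule inv0)
    then have "lm (delta g) y = 0" using g by (simp add: lmz)
    moreover have "lm (delta g) y = dL x g"
      unfolding y_def using g by (simp add: lm_conv[symmetric] conv_delta_delta lm_id)
    ultimately show ?thesis by simp
  qed
  then show ?thesis using counit[of x] by simp
qed


section \<open>Matrix side\<close>

lemma mv_neg: "(- (A::complex^'n^'m)) *v v = - (A *v v)"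
  using matrix_vector_mult_diff_rdistrib[of 0 A v] by simp

lemma mv_mscale: "mscale c A *v v = c *s (A *v v)"
  by (simp add: matrix_vector_mult_def vec_eq_iff mscale_def sum_distrib_left mult.assoc)

lemma mscale_mult: "B ** mscale c A = mscale c (B ** A)"
  by (simp add: matrix_matrix_mult_def vec_eq_iff mscale_def sum_distrib_left mult.left_commute)

lemma mv_sum_list: "sum_list (map f l) *v v = sum_list (map (\<lambda>x. f x *v v) l)"
  by (induction l) (simp_all add: matrix_vector_mult_add_rdistrib)

lemma vm_sum_list: "A *v sum_list (map f l) = sum_list (map (\<lambda>x. A *v f x) l)"
  by (induction l) (simp_all add: matrix_vector_right_distrib)

lemma mv_sum: "(\<Sum>i\<in>I. f i) *v v = (\<Sum>i\<in>I. f i *v v)"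
  by (induct I rule: infinite_finite_induct) (simp_all add: matrix_vector_mult_add_rdistrib)

lemma sum_sum_list: "(\<Sum>g\<in>I. sum_list (map (f g) l)) = sum_list (map (\<lambda>x. \<Sum>g\<in>I. f g x) l)"
  by (induction l) (simp_all add: sum.distrib)

lemma sum_const_vec: "(\<Sum>g\<in>S3. (x :: complex^'n)) = (6::complex) *s x"
  unfolding sum_S3 by (simp add: vec_eq_iff)

lemma mult_mat_eq: "(\<And>v. A *v v = B *v v) \<Longrightarrow> A = B"
  using matrix_eq by blast

definition cspan_closed :: "((complex^'n^'n) \<Rightarrow> bool) \<Rightarrow> bool" where
  "cspan_closed P \<longleftrightarrow> P 0 \<and> (\<forall>x y. P x \<longrightarrow> P y \<longrightarrow> P (x + y)) \<and> (\<forall>c x. P x \<longrightarrow> P (mscale c x))"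

lemma cspan_induct:
  assumes "cspan_closed P" "\<And>x. x \<in> S \<Longrightarrow> P x" "x \<in> cspan S"
  shows "P x"
proof -
  obtain l where l: "set (map snd l) \<subseteq> S" "x = sum_list (map (\<lambda>(c,m). mscale c m) l)"
    using assms(3) unfolding cspan_def by blast
  have "P (sum_list (map (\<lambda>(c,m). mscale c m) l))" using l(1)
  proof (induction l)
    case Nil then show ?case using assms(1) by (simp add: cspan_closed_def)
  next
    case (Cons a l)
    then show ?case using assms(1,2) unfolding cspan_closed_def by (auto simp: split_def)
  qed
  then show ?thesis using l(2) by simp
qed

lemma zero_in_cspan: "0 \<in> cspan S"
  unfolding cspan_def by (rule CollectI, rule exI[of _ "[]"]) simp

lemma cspan_left:
  assumes "\<And>x. x \<in> S \<Longrightarrow> B ** x \<in> S" "x \<in> cspan S"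
  shows "B ** x \<in> cspan S"
proof -
  obtain l where l: "set (map snd l) \<subseteq> S" "x = sum_list (map (\<lambda>(c,m). mscale c m) l)"
    using assms(2) unfolding cspan_def by blast
  let ?l = "map (\<lambda>(c,m). (c, B ** m)) l"
  have "set (map snd ?l) \<subseteq> S" using l(1) assms(1) by auto
  moreover have "B ** x = sum_list (map (\<lambda>(c,m). mscale c m) ?l)"
    unfolding l(2) by (induction l) (auto simp: matrix_add_ldistrib mscale_mult times0_right split_def)
  ultimately show ?thesis unfolding cspan_def by blast
qed


lemma mv_uminus_right: "(A::complex^'n^'m) *v (- w) = - (A *v w)"
  using matrix_vector_mult_diff_distrib[of A 0 w] by simp

lemma vec_half: "(x::complex^'n) = - x \<Longrightarrow> x = 0"
proof -
  assume "x = - x"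
  then have "x + x = 0" by (metis add.right_inverse)
  then have "(2::complex) *s x = 0" by (metis one_add_one vector_sadd_rdistrib vector_smult_lid)
  then have "(1/2::complex) *s ((2::complex) *s x) = 0" by simp
  then show "x = 0" by (simp add: vector_smult_assoc)
qed

lemma vec_six: "(6::complex) *s (x::complex^'n) = (6::complex) *s y \<Longrightarrow> x = y"
proof -
  assume "(6::complex) *s x = (6::complex) *s y"
  then have "(1/6::complex) *s ((6::complex) *s x) = (1/6::complex) *s ((6::complex) *s y)" by simp
  then show "x = y" by (simp add: vector_smult_assoc)
qed

lemma alg_add_eq: "alg_add a b = a + b"
  by (simp add: alg_add_def fun_eq_iff)

lemma CS3_add: "a \<in> CS3 \<Longrightarrow> b \<in> CS3 \<Longrightarrow> a + b \<in> CS3"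
  by (simp add: CS3_def)

lemma CS3_sum: "(\<And>i. i \<in> I \<Longrightarrow> f i \<in> CS3) \<Longrightarrow> (\<Sum>i\<in>I. f i) \<in> CS3"
  by (induct I rule: infinite_finite_induct) (auto simp: CS3_def)

lemma Ex_in: "Ex p \<in> CS3"
  by (simp add: CS3_def Ex_apply)

lemma matrix_side:
  fixes \<pi> :: "((nat \<Rightarrow> nat) \<Rightarrow> complex) \<Rightarrow> complex^'n^'n"
    and J :: "complex^'n \<Rightarrow> complex^'n"
    and \<gamma> D :: "complex^'n^'n"
  assumes rep: "star_rep \<pi>" and rs: "real_structure J" and oz: "order_zero J \<pi>"
    and gr: "grading J \<pi> \<gamma>" and dir: "dirac J \<pi> \<gamma> D" and X: "X \<in> OmegaD \<pi> D"
  shows "\<pi> p2 ** X ** \<pi> p2 = 0"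
proof -
  have pi_add: "\<And>a b. a \<in> CS3 \<Longrightarrow> b \<in> CS3 \<Longrightarrow> \<pi> (a + b) = \<pi> a + \<pi> b"
    using rep by (simp add: star_rep_def alg_add_eq)
  have pi_scale: "\<And>c a. a \<in> CS3 \<Longrightarrow> \<pi> (alg_scale c a) = mscale c (\<pi> a)"
    using rep by (simp add: star_rep_def)
  have pi_mult: "\<And>a b. a \<in> CS3 \<Longrightarrow> b \<in> CS3 \<Longrightarrow> \<pi> (conv a b) = \<pi> a ** \<pi> b"
    using rep by (simp add: star_rep_def)
  have pi_one: "\<pi> (delta id) = mat 1"
    using rep by (simp add: star_rep_def)
  have pi0: "\<pi> 0 = 0"
  proof -
    have z: "(0::(nat \<Rightarrow> nat) \<Rightarrow> complex) \<in> CS3" by (simp add: CS3_def)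
    have "\<pi> (0 + 0) = \<pi> 0 + \<pi> 0" by (rule pi_add[OF z z])
    then show ?thesis by simp
  qed
  have pi_sum: "\<pi> (\<Sum>i\<in>I. f i) = (\<Sum>i\<in>I. \<pi> (f i))" if "finite I" "\<And>i. i \<in> I \<Longrightarrow> f i \<in> CS3" for I f
    using that
  proof (induct I rule: finite_induct)
    case empty then show ?case by (simp only: sum.empty pi0)
  next
    case (insert x F)
    have fx: "f x \<in> CS3" and fF: "\<And>i. i \<in> F \<Longrightarrow> f i \<in> CS3" using insert.prems by auto
    have "\<pi> (\<Sum>i\<in>insert x F. f i) = \<pi> (f x + (\<Sum>i\<in>F. f i))" by (subst sum.insert[OF insert(1,2)]) (rule refl)
    also have "\<dots> = \<pi> (f x) + \<pi> (\<Sum>i\<in>F. f i)" by (rule pi_add[OF fx CS3_sum[OF fF]])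
    also have "\<dots> = \<pi> (f x) + (\<Sum>i\<in>F. \<pi> (f i))" using insert.hyps(3)[OF fF] by simp
    finally show ?case by (simp only: sum.insert[OF insert(1,2)])
  qed
  have J_add: "\<And>x y. J (x + y) = J x + J y" and J_scale: "\<And>c x. J (c *s x) = cnj c *s J x"
    using rs by (simp_all add: real_structure_def)
  have ozc: "\<And>a b x. a \<in> CS3 \<Longrightarrow> b \<in> CS3 \<Longrightarrow> \<pi> a *v op0 J \<pi> b x = op0 J \<pi> b (\<pi> a *v x)"
    using oz by (simp add: order_zero_def)
  have g_sq: "\<gamma> ** \<gamma> = mat 1" and g_comm: "\<And>a. a \<in> CS3 \<Longrightarrow> \<gamma> ** \<pi> a = \<pi> a ** \<gamma>"
    using gr by (simp_all add: grading_def)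
  obtain l where l: "set l \<subseteq> CS3 \<times> CS3" "\<And>x. \<gamma> *v x = sum_list (map (\<lambda>(p,q). \<pi> p *v op0 J \<pi> q x) l)"
    using gr unfolding grading_def by blast
  have D_anti: "D ** \<gamma> = - (\<gamma> ** D)"
    and fo: "\<And>a b x. a \<in> CS3 \<Longrightarrow> b \<in> CS3 \<Longrightarrow> comm D (\<pi> a) *v op0 J \<pi> b x = op0 J \<pi> b (comm D (\<pi> a) *v x)"
    using dir by (simp_all add: dirac_def)
  have op0_add: "\<And>b x y. op0 J \<pi> b (x + y) = op0 J \<pi> b x + op0 J \<pi> b y"
    by (simp add: op0_def J_add matrix_vector_right_distrib)
  have op0_scale: "\<And>b c x. op0 J \<pi> b (c *s x) = c *s op0 J \<pi> b x"
    by (simp add: op0_def J_scale vector_scalar_commute)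
  have op0_zero: "\<And>b. op0 J \<pi> b 0 = 0" using op0_add by (metis add.right_neutral add_cancel_right_right)
  have gv: "\<And>a w. a \<in> CS3 \<Longrightarrow> \<gamma> *v (\<pi> a *v w) = \<pi> a *v (\<gamma> *v w)"
    by (simp add: matrix_vector_mul_assoc g_comm)
  have gD: "\<And>w. \<gamma> *v (D *v w) = - (D *v (\<gamma> *v w))"
  proof -
    fix w
    have "\<gamma> ** D = - (D ** \<gamma>)" using D_anti by simp
    then show "\<gamma> *v (D *v w) = - (D *v (\<gamma> *v w))"
      by (simp add: matrix_vector_mul_assoc mv_neg)
  qed
  define cO where "cO Y \<longleftrightarrow> (\<forall>b\<in>CS3. \<forall>v. Y *v op0 J \<pi> b v = op0 J \<pi> b (Y *v v))" for Y :: "complex^'n^'n"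
  define an where "an Y \<longleftrightarrow> (\<forall>v. \<gamma> *v (Y *v v) = - (Y *v (\<gamma> *v v)))" for Y :: "complex^'n^'n"
  have closed: "cspan_closed (\<lambda>Y. cO Y \<and> an Y)"
    unfolding cspan_closed_def cO_def an_def
    by (auto simp: matrix_vector_mult_add_rdistrib mv_mscale op0_add op0_scale op0_zero
        matrix_vector_right_distrib vector_scalar_commute vector_smult_rneg)
  have gens: "cO Y \<and> an Y" if Ymem: "Y \<in> {\<pi> a ** comm D (\<pi> b) | a b. a \<in> CS3 \<and> b \<in> CS3}" for Y
  proof -
    obtain a b where ab: "a \<in> CS3" "b \<in> CS3" "Y = \<pi> a ** comm D (\<pi> b)" using Ymem by blast
    have Yv: "Y *v v = \<pi> a *v (comm D (\<pi> b) *v v)" for v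
      by (simp add: ab(3) matrix_vector_mul_assoc)
    have cv: "comm D (\<pi> b) *v v = D *v (\<pi> b *v v) - \<pi> b *v (D *v v)" for v
      by (simp add: comm_def matrix_vector_mult_diff_rdistrib matrix_vector_mul_assoc)
    have "cO Y" unfolding cO_def Yv
      using ab(1,2) by (simp add: fo ozc)
    moreover have "an Y" unfolding an_def
    proof
      fix v
      show "\<gamma> *v (Y *v v) = - (Y *v (\<gamma> *v v))"
        unfolding Yv cv using ab(1,2)
        by (simp add: gv gD matrix_vector_mult_diff_distrib mv_uminus_right)
    qed
    ultimately show ?thesis by blast
  qed
  have XcO: "cO X" "an X"
    using cspan_induct[OF closed gens] X unfolding OmegaD_def by blast+
  define P where "P = \<pi> p2"
  have PcO: "cO P" unfolding cO_def P_def using ozc by simp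
  have gP: "\<And>v. \<gamma> *v (P *v v) = P *v (\<gamma> *v v)" unfolding P_def by (simp add: gv)
  define lam where "lam p = 6 * p id - 3 * (p cr + p cr2)" for p :: "(nat \<Rightarrow> nat) \<Rightarrow> complex"
  define W where "W v = sum_list (map (\<lambda>(p,q). lam p *s op0 J \<pi> q v) l)" for v
  have Wc: "Y *v W v = W (Y *v v)" if "cO Y" for Y v
  proof -
    have "Y *v W v = sum_list (map (\<lambda>x. Y *v (case x of (p,q) \<Rightarrow> lam p *s op0 J \<pi> q v)) l)"
      unfolding W_def by (rule vm_sum_list)
    also have "\<dots> = W (Y *v v)" unfolding W_def
      using l(1) that unfolding cO_def
      by (intro arg_cong[where f=sum_list] map_cong) (auto simp: vector_scalar_commute)
    finally show ?thesis .
  qed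
  define U where "U g = \<pi> (delta g)" for g
  have UU: "U g *v (U (inv g) *v w) = w" if "g \<in> S3" for g w
    using that by (simp add: U_def matrix_vector_mul_assoc pi_mult[symmetric] conv_delta_delta pi_one)
  have key: "(6::complex) *s (P *v (\<gamma> *v v)) = P *v W v" for v
  proof -
    have s1: "\<gamma> *v v = U g *v (\<gamma> *v (U (inv g) *v v))" if g: "g \<in> S3" for g
      using g by (simp add: U_def gv UU[unfolded U_def])
    have s2: "U g *v (\<gamma> *v (U (inv g) *v v))
        = sum_list (map (\<lambda>x. case x of (p,q) \<Rightarrow> \<pi> (conv (conv (delta g) p) (delta (inv g))) *v op0 J \<pi> q v) l)"
      if g: "g \<in> S3" for g
    proof -
      have "U g *v (\<gamma> *v (U (inv g) *v v))
         = sum_list (map (\<lambda>x. U g *v (case x of (p,q) \<Rightarrow> \<pi> p *v op0 J \<pi> q (U (inv g) *v v))) l)"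
        unfolding l(2) by (rule vm_sum_list)
      also have "\<dots> = sum_list (map (\<lambda>x. case x of (p,q) \<Rightarrow> \<pi> (conv (conv (delta g) p) (delta (inv g))) *v op0 J \<pi> q v) l)"
      proof (intro arg_cong[where f=sum_list] map_cong refl)
        fix x assume x: "x \<in> set l"
        obtain p q where pq: "x = (p,q)" by (cases x)
        have pq3: "p \<in> CS3" "q \<in> CS3" using x l(1) pq by auto
        have "U g *v (\<pi> p *v op0 J \<pi> q (U (inv g) *v v)) = U g *v (\<pi> p *v (U (inv g) *v op0 J \<pi> q v))"
          unfolding U_def using g pq3 by (simp add: ozc)
        also have "\<dots> = \<pi> (conv (conv (delta g) p) (delta (inv g))) *v op0 J \<pi> q v"
          unfolding U_def using g pq3 by (simp add: matrix_vector_mul_assoc pi_mult matrix_mul_assoc)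
        finally show "U g *v (case x of (p,q) \<Rightarrow> \<pi> p *v op0 J \<pi> q (U (inv g) *v v))
            = (case x of (p,q) \<Rightarrow> \<pi> (conv (conv (delta g) p) (delta (inv g))) *v op0 J \<pi> q v)"
          unfolding pq by simp
      qed
      finally show ?thesis .
    qed
    have "(6::complex) *s (\<gamma> *v v) = (\<Sum>g\<in>S3. \<gamma> *v v)" by (simp only: sum_const_vec)
    also have "\<dots> = (\<Sum>g\<in>S3. sum_list (map (\<lambda>x. case x of (p,q) \<Rightarrow> \<pi> (conv (conv (delta g) p) (delta (inv g))) *v op0 J \<pi> q v) l))"
      by (rule sum.cong[OF refl]) (simp only: s1[symmetric] s2[symmetric])
    also have "\<dots> = sum_list (map (\<lambda>x. \<Sum>g\<in>S3. case x of (p,q) \<Rightarrow> \<pi> (conv (conv (delta g) p) (delta (inv g))) *v op0 J \<pi> q v) l)"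
      by (rule sum_sum_list)
    also have "\<dots> = sum_list (map (\<lambda>x. case x of (p,q) \<Rightarrow> \<pi> (Ex p) *v op0 J \<pi> q v) l)"
    proof (intro arg_cong[where f=sum_list] map_cong refl)
      fix x assume x: "x \<in> set l"
      obtain p q where pq: "x = (p,q)" by (cases x)
      have "p \<in> CS3" using x l(1) pq by auto
      have "\<pi> (Ex p) = (\<Sum>g\<in>S3. \<pi> (conv (conv (delta g) p) (delta (inv g))))"
        unfolding Ex_def by (rule pi_sum) simp_all
      then show "(\<Sum>g\<in>S3. case x of (p,q) \<Rightarrow> \<pi> (conv (conv (delta g) p) (delta (inv g))) *v op0 J \<pi> q v)
          = (case x of (p,q) \<Rightarrow> \<pi> (Ex p) *v op0 J \<pi> q v)"
        unfolding pq by (simp add: mv_sum)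
    qed
    finally have six: "(6::complex) *s (\<gamma> *v v) = sum_list (map (\<lambda>x. case x of (p,q) \<Rightarrow> \<pi> (Ex p) *v op0 J \<pi> q v) l)" .
    have "(6::complex) *s (P *v (\<gamma> *v v)) = P *v ((6::complex) *s (\<gamma> *v v))"
      by (simp add: vector_scalar_commute)
    also have "\<dots> = sum_list (map (\<lambda>x. P *v (case x of (p,q) \<Rightarrow> \<pi> (Ex p) *v op0 J \<pi> q v)) l)"
      unfolding six by (rule vm_sum_list)
    also have "\<dots> = sum_list (map (\<lambda>x. P *v (case x of (p,q) \<Rightarrow> lam p *s op0 J \<pi> q v)) l)"
    proof (intro arg_cong[where f=sum_list] map_cong refl)
      fix x assume x: "x \<in> set l"
      obtain p q where pq: "x = (p,q)" by (cases x)
      have "P *v (\<pi> (Ex p) *v op0 J \<pi> q v) = \<pi> (conv p2 (Ex p)) *v op0 J \<pi> q v"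
        unfolding P_def by (simp add: matrix_vector_mul_assoc pi_mult Ex_in)
      also have "\<dots> = P *v (lam p *s op0 J \<pi> q v)"
        unfolding conv_p2_Ex P_def lam_def[symmetric] by (simp add: pi_scale mv_mscale vector_scalar_commute)
      finally show "P *v (case x of (p,q) \<Rightarrow> \<pi> (Ex p) *v op0 J \<pi> q v) = P *v (case x of (p,q) \<Rightarrow> lam p *s op0 J \<pi> q v)"
        unfolding pq by simp
    qed
    also have "\<dots> = P *v W v" unfolding W_def by (rule vm_sum_list[symmetric])
    finally show ?thesis .
  qed
  define Y where "Y = P ** X ** P"
  have Yv: "Y *v v = P *v (X *v (P *v v))" for v by (simp add: Y_def matrix_vector_mul_assoc matrix_mul_assoc)
  have c1: "(6::complex) *s (Y *v (\<gamma> *v v)) = Y *v W v" for v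
  proof -
    have "(6::complex) *s (P *v (X *v (P *v (\<gamma> *v v)))) = P *v (X *v ((6::complex) *s (P *v (\<gamma> *v v))))"
      by (simp only: vector_scalar_commute)
    then show ?thesis unfolding Yv by (simp only: key)
  qed
  have c2: "(6::complex) *s (\<gamma> *v (Y *v v)) = Y *v W v" for v
  proof -
    have "(6::complex) *s (\<gamma> *v (Y *v v)) = (6::complex) *s (P *v (\<gamma> *v (X *v (P *v v))))"
      unfolding Yv by (simp add: gP)
    also have "\<dots> = P *v W (X *v (P *v v))" by (rule key)
    also have "\<dots> = P *v (X *v (P *v W v))" by (simp only: Wc[OF XcO(1)] Wc[OF PcO])
    finally show ?thesis by (simp only: Yv)
  qed
  have c3: "\<gamma> *v (Y *v v) = - (Y *v (\<gamma> *v v))" for v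
  proof -
    have "\<gamma> *v (Y *v v) = P *v (\<gamma> *v (X *v (P *v v)))" unfolding Yv by (simp add: gP)
    also have "\<dots> = - (P *v (X *v (\<gamma> *v (P *v v))))"
      using XcO(2) unfolding an_def by (simp add: mv_uminus_right)
    also have "\<dots> = - (Y *v (\<gamma> *v v))" by (simp add: Yv gP)
    finally show ?thesis .
  qed
  have Yg: "Y *v (\<gamma> *v v) = 0" for v
  proof -
    have e: "Y *v (\<gamma> *v v) = \<gamma> *v (Y *v v)" by (rule vec_six) (simp only: c1 c2)
    have "Y *v (\<gamma> *v v) = - (Y *v (\<gamma> *v v))" using e c3 by (rule trans)
    then show ?thesis by (rule vec_half)
  qed
  have "Y = 0"
  proof (rule mult_mat_eq)
    fix v
    have "Y *v v = Y *v (\<gamma> *v (\<gamma> *v v))" by (simp add: matrix_vector_mul_assoc g_sq)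
    then show "Y *v v = 0 *v v" by (simp add: Yg)
  qed
  then show ?thesis unfolding Y_def P_def .
qed


theorem mainTheorem18:
  fixes \<pi> :: "((nat \<Rightarrow> nat) \<Rightarrow> complex) \<Rightarrow> complex^'n^'n"
    and J :: "complex^'n \<Rightarrow> complex^'n"
    and \<gamma> D :: "complex^'n^'n"
  assumes "star_rep \<pi>"
    and "real_structure J"
    and "order_zero J \<pi>"
    and "grading J \<pi> \<gamma>"
    and "dirac J \<pi> \<gamma> D"
    and "OmegaD \<pi> D \<noteq> {0}"
  shows "\<not> (\<exists>(sc :: complex \<Rightarrow> 'w::ab_group_add \<Rightarrow> 'w) lm rm d dL dR \<phi>.
            bicovariant_fodc sc lm rm d dL dR \<and> calc_iso \<pi> D sc lm rm d \<phi>)"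
proof
  assume "\<exists>(sc :: complex \<Rightarrow> 'w::ab_group_add \<Rightarrow> 'w) lm rm d dL dR \<phi>.
            bicovariant_fodc sc lm rm d dL dR \<and> calc_iso \<pi> D sc lm rm d \<phi>"
  then obtain sc :: "complex \<Rightarrow> 'w \<Rightarrow> 'w" and lm rm d dL dR \<phi> where
    bic: "bicovariant_fodc sc lm rm d dL dR" and iso: "calc_iso \<pi> D sc lm rm d \<phi>" by blast
  have bij: "bij_betw \<phi> (OmegaD \<pi> D) UNIV" using iso by (simp add: calc_iso_def)
  have phadd: "\<And>x y. x \<in> OmegaD \<pi> D \<Longrightarrow> y \<in> OmegaD \<pi> D \<Longrightarrow> \<phi> (x + y) = \<phi> x + \<phi> y"
    using iso by (simp add: calc_iso_def)
  have phl: "\<And>a x. a \<in> CS3 \<Longrightarrow> x \<in> OmegaD \<pi> D \<Longrightarrow> \<phi> (\<pi> a ** x) = lm a (\<phi> x)"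
    and phr: "\<And>a x. a \<in> CS3 \<Longrightarrow> x \<in> OmegaD \<pi> D \<Longrightarrow> \<phi> (x ** \<pi> a) = rm (\<phi> x) a"
    using iso by (simp_all add: calc_iso_def)
  have z: "0 \<in> OmegaD \<pi> D" unfolding OmegaD_def by (rule zero_in_cspan)
  have ph0: "\<phi> 0 = 0"
    using phadd[OF z z] by simp
  have pi_mult: "\<And>a b. a \<in> CS3 \<Longrightarrow> b \<in> CS3 \<Longrightarrow> \<pi> (conv a b) = \<pi> a ** \<pi> b"
    using assms(1) by (simp add: star_rep_def)
  have left: "\<pi> a ** X \<in> OmegaD \<pi> D" if "a \<in> CS3" "X \<in> OmegaD \<pi> D" for a X
    unfolding OmegaD_def
  proof (rule cspan_left)
    show "X \<in> cspan {\<pi> a ** comm D (\<pi> b) |a b. a \<in> CS3 \<and> b \<in> CS3}" using that(2) unfolding OmegaD_def .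
    fix Y assume "Y \<in> {\<pi> a ** comm D (\<pi> b) |a b. a \<in> CS3 \<and> b \<in> CS3}"
    then obtain a' b where ab: "a' \<in> CS3" "b \<in> CS3" "Y = \<pi> a' ** comm D (\<pi> b)" by blast
    have "\<pi> a ** Y = \<pi> (conv a a') ** comm D (\<pi> b)"
      using ab that(1) by (simp add: pi_mult matrix_mul_assoc)
    then show "\<pi> a ** Y \<in> {\<pi> a ** comm D (\<pi> b) |a b. a \<in> CS3 \<and> b \<in> CS3}" using ab conv_in[of a a'] by blast
  qed
  have van: "rm (lm p2 y) p2 = 0" for y
  proof -
    have "y \<in> \<phi> ` OmegaD \<pi> D" using bij by (simp add: bij_betw_def)
    then obtain X where X: "X \<in> OmegaD \<pi> D" "y = \<phi> X" by blast
    have PX: "\<pi> p2 ** X \<in> OmegaD \<pi> D" by (rule left[OF p2_in X(1)])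
    have "rm (lm p2 y) p2 = \<phi> (\<pi> p2 ** X ** \<pi> p2)"
      using X PX by (simp add: phl phr)
    also have "\<dots> = 0" using matrix_side[OF assms(1-5) X(1)] ph0 by simp
    finally show ?thesis .
  qed
  have all0: "\<And>x::'w. x = 0" using abstract_side[OF bic van] .
  obtain X where X: "X \<in> OmegaD \<pi> D" "X \<noteq> 0" using assms(6) z by blast
  have "\<phi> X = \<phi> 0" using all0 by metis
  then have "X = 0" using bij X(1) z unfolding bij_betw_def inj_on_def by blast
  then show False using X(2) by simp
qed

end
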